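(* Let $\alpha=\exp\left(\frac{2\pi i}{5}\right)$, let $c,x\in\mathbb{C}$, and let $(a_1,A_1),\dots,(a_p,A_p)$ and $(b_1,B_1),\dots,(b_q,B_q)$ be parameter pairs ($a_j,b_j\in\mathbb{C}$, $A_j,B_j$ nonzero reals) such that all Gamma functions involved are well defined and all series involved converge. Then $$\sum_{k=0}^{4}\alpha^{k}\,{}_p\Psi_q\left[\begin{array}{c}(a_1,A_1),\dots,(a_p,A_p);\\(b_1,B_1),\dots,(b_q,B_q);\end{array} c(x\alpha^k)^2\right] =\frac{5c^2x^4\,\Gamma\!\left(\frac35\right)\Gamma\!\left(\frac45\right)\Gamma\!\left(\frac65\right)\Gamma\!\left(\frac75\right)}{2}\;{}_p\Psi_{q+4}\left[\begin{array}{c}(a_1+2A_1,5A_1),\dots,(a_p+2A_p,5A_p);\\ \left(\tfrac35,1\right),\left(\tfrac45,1\right),\left(\tfrac65,1\right),\left(\tfrac75,1\right),(b_1+2B_1,5B_1),\dots,(b_q+2B_q,5B_q);\end{array}\left(\frac{cx^2}{5}\right)^5\right].$$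
   Context: The Fox–Wright function is defined by the series $${}_p\Psi_q\left[\begin{array}{c}(\alpha_1,A_1),\dots,(\alpha_p,A_p);\\(\beta_1,B_1),\dots,(\beta_q,B_q);\end{array}z\right]=\sum_{n=0}^{\infty}\frac{\Gamma(\alpha_1+A_1n)\cdots\Gamma(\alpha_p+A_pn)}{\Gamma(\beta_1+B_1n)\cdots\Gamma(\beta_q+B_qn)}\frac{z^n}{n!},$$ where $\alpha_i,\beta_j\in\mathbb{C}$ and $A_i,B_j$ are nonzero real numbers chosen so that the Gamma products are well defined. Values of parameters and variables for which the expressions do not make sense are excluded. *)

theory Defs
  imports "HOL-Analysis.Analysis"
begin

definition fw_term :: "(complex \<times> real) list \<Rightarrow> (complex \<times> real) list \<Rightarrow> complex \<Rightarrow> nat \<Rightarrow> complex" where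
  "fw_term as bs z n =
     (\<Prod>p\<leftarrow>as. Gamma (fst p + of_real (snd p) * of_nat n)) /
     (\<Prod>p\<leftarrow>bs. Gamma (fst p + of_real (snd p) * of_nat n)) * z ^ n / of_nat (fact n)"

definition fox_wright :: "(complex \<times> real) list \<Rightarrow> (complex \<times> real) list \<Rightarrow> complex \<Rightarrow> complex" where
  "fox_wright as bs z = (\<Sum>n. fw_term as bs z n)"

definition fw_num_ok :: "(complex \<times> real) list \<Rightarrow> bool" where
  "fw_num_ok as \<longleftrightarrow> (\<forall>p\<in>set as. \<forall>n::nat. fst p + of_real (snd p) * of_nat n \<notin> \<int>\<^sub>\<le>\<^sub>0)"

end

theory Submission
  imports Defs
begin

lemma alpha_pow_eq_1:
  "exp (2 * of_real pi * \<i> / 5) ^ j = 1 \<longleftrightarrow> 5 dvd j"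
proof -
  have "exp (2 * of_real pi * \<i> / 5) ^ j = exp (of_nat j * (2 * of_real pi * \<i> / 5))"
    by (metis exp_of_nat_mult times_divide_eq_right)
  also have "\<dots> = 1 \<longleftrightarrow> (\<exists>n::int. 2 * pi * real j / 5 = of_int (2*n) * pi)"
    by (simp add: exp_eq_1)
  also have "\<dots> \<longleftrightarrow> (\<exists>n::int. int j = 5 * n)"
  proof
    assume "\<exists>n::int. 2 * pi * real j / 5 = of_int (2*n) * pi"
    then obtain n :: int where "2 * pi * real j / 5 = of_int (2*n) * pi" by blast
    then have "real j = 5 * of_int n" using pi_gt_zero by (simp add: field_simps)
    then have "int j = 5 * n" by (metis of_int_eq_iff of_int_mult of_int_of_nat_eq of_int_numeral)
    then show "\<exists>n::int. int j = 5 * n" by blast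
  next
    assume "\<exists>n::int. int j = 5 * n"
    then obtain n :: int where "int j = 5 * n" by blast
    then have "real j = 5 * of_int n" by (metis of_int_eq_iff of_int_mult of_int_of_nat_eq of_int_numeral)
    then show "\<exists>n::int. 2 * pi * real j / 5 = of_int (2*n) * pi" by (intro exI[of _ n]) simp
  qed
  also have "\<dots> \<longleftrightarrow> 5 dvd j" by (metis dvd_def int_dvd_int_iff of_nat_numeral)
  finally show ?thesis .
qed

lemma root_sum:
  "(\<Sum>k<5::nat. (exp (2 * of_real pi * \<i> / 5) ^ j) ^ k) = (if 5 dvd j then 5 else 0)"
proof (cases "5 dvd j")
  case True
  then show ?thesis using alpha_pow_eq_1[of j] by simp
next
  case False
  let ?w = "exp (2 * of_real pi * \<i> / 5) ^ j"
  have w1: "?w \<noteq> 1" using alpha_pow_eq_1[of j] False by simp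
  have "?w ^ 5 = exp (2 * of_real pi * \<i> / 5) ^ (5 * j)" by (simp add: power_mult[symmetric] mult.commute)
  also have "\<dots> = 1" by (subst alpha_pow_eq_1) simp
  finally have w5: "?w ^ 5 = 1" .
  have "(\<Sum>k<5::nat. ?w ^ k) = (?w ^ 5 - 1) / (?w - 1)"
    using w1 by (simp add: geometric_sum)
  then show ?thesis using w5 False by simp
qed

lemma fact_gamma:
  "of_nat (fact (5*m+2)) * (Gamma (3/5) * Gamma (4/5) * Gamma (6/5) * Gamma (7/5)) =
   (2 * 5^(5*m) * of_nat (fact m) * (Gamma (3/5 + of_nat m) * Gamma (4/5 + of_nat m) * Gamma (6/5 + of_nat m) * Gamma (7/5 + of_nat m)) :: complex)"
proof (induction m)
  case 0
  then show ?case by simp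
next
  case (Suc m)
  have f: "(fact (5 * Suc m + 2) :: complex) = fact (5*m+2) * (of_nat m + 3/5) * (of_nat m + 4/5) * (of_nat m + 1) * (of_nat m + 6/5) * (of_nat m + 7/5) * 5^5"
  proof -
    have p5: "(5::complex)^5 = 5*5*5*5*5" by simp
    have e: "5 * Suc m + 2 = Suc (Suc (Suc (Suc (Suc (5*m+2)))))" by simp
    have h3: "(of_nat (Suc (5*m+2)) :: complex) = 5 * (of_nat m + 3/5)" by (simp add: field_simps)
    have h4: "(of_nat (Suc (Suc (5*m+2))) :: complex) = 5 * (of_nat m + 4/5)" by (simp add: field_simps)
    have h5: "(of_nat (Suc (Suc (Suc (5*m+2)))) :: complex) = 5 * (of_nat m + 1)" by (simp add: field_simps)
    have h6: "(of_nat (Suc (Suc (Suc (Suc (5*m+2))))) :: complex) = 5 * (of_nat m + 6/5)" by (simp add: field_simps)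
    have h7: "(of_nat (Suc (Suc (Suc (Suc (Suc (5*m+2)))))) :: complex) = 5 * (of_nat m + 7/5)" by (simp add: field_simps)
    show ?thesis
      unfolding e fact_Suc[of "Suc (Suc (Suc (Suc (5*m+2))))"] fact_Suc[of "Suc (Suc (Suc (5*m+2)))"]
        fact_Suc[of "Suc (Suc (5*m+2))"] fact_Suc[of "Suc (5*m+2)"] fact_Suc[of "5*m+2"]
      unfolding of_nat_mult h3 h4 h5 h6 h7 p5
      by (simp only: mult_ac)
  qed
  have g: "Gamma (r + of_nat (Suc m)) = (r + of_nat m) * Gamma (r + of_nat m)" if "Re r > 0" for r :: complex
  proof -
    have ni: "r + of_nat m \<notin> \<int>\<^sub>\<le>\<^sub>0"
    proof
      assume "r + of_nat m \<in> \<int>\<^sub>\<le>\<^sub>0"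
      then have "r + of_nat m \<in> \<real>\<^sub>\<le>\<^sub>0" using nonpos_Ints_subset_nonpos_Reals by blast
      then have "Re (r + of_nat m) \<le> 0" by (simp only: complex_nonpos_Reals_iff)
      with that show False by simp
    qed
    have eq: "r + of_nat (Suc m) = (r + of_nat m) + 1" by (simp add: algebra_simps)
    show ?thesis unfolding eq by (rule Gamma_plus1[OF ni])
  qed
  have g3: "Gamma (3/5 + of_nat (Suc m) :: complex) = (3/5 + of_nat m) * Gamma (3/5 + of_nat m)" by (rule g) simp
  have g4: "Gamma (4/5 + of_nat (Suc m) :: complex) = (4/5 + of_nat m) * Gamma (4/5 + of_nat m)" by (rule g) simp
  have g6: "Gamma (6/5 + of_nat (Suc m) :: complex) = (6/5 + of_nat m) * Gamma (6/5 + of_nat m)" by (rule g) simp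
  have g7: "Gamma (7/5 + of_nat (Suc m) :: complex) = (7/5 + of_nat m) * Gamma (7/5 + of_nat m)" by (rule g) simp
  let ?Gz = "Gamma (3/5) * Gamma (4/5) * Gamma (6/5) * Gamma (7/5) :: complex"
  let ?G = "Gamma (3/5 + of_nat m) * Gamma (4/5 + of_nat m) * Gamma (6/5 + of_nat m) * Gamma (7/5 + of_nat m) :: complex"
  let ?n = "of_nat m :: complex"
  have IH: "fact (5*m+2) * ?Gz = 2 * 5^(5*m) * fact m * ?G" using Suc.IH by (simp only: of_nat_fact)
  have "of_nat (fact (5 * Suc m + 2)) * ?Gz = (fact (5*m+2) * ?Gz) * ((?n + 3/5) * (?n + 4/5) * (?n + 1) * (?n + 6/5) * (?n + 7/5) * 5^5)"
    by (simp only: of_nat_fact f) (simp only: mult_ac)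
  also have "\<dots> = (2 * 5^(5*m) * fact m * ?G) * ((?n + 3/5) * (?n + 4/5) * (?n + 1) * (?n + 6/5) * (?n + 7/5) * 5^5)"
    by (simp only: IH)
  also have "\<dots> = 2 * 5^(5 * Suc m) * ((?n + 1) * fact m) * (((3/5 + ?n) * Gamma (3/5 + ?n)) * ((4/5 + ?n) * Gamma (4/5 + ?n)) * ((6/5 + ?n) * Gamma (6/5 + ?n)) * ((7/5 + ?n) * Gamma (7/5 + ?n)))"
  proof -
    have "(5::complex)^(5 * Suc m) = 5^(5*m) * 5^5" by (simp add: power_add)
    moreover have "(3/5 + ?n) = ?n + 3/5" "(4/5 + ?n) = ?n + 4/5" "(6/5 + ?n) = ?n + 6/5" "(7/5 + ?n) = ?n + 7/5"
      by (simp_all add: add.commute)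
    ultimately show ?thesis by (simp only: mult_ac)
  qed
  also have "\<dots> = 2 * 5^(5 * Suc m) * of_nat (fact (Suc m)) * (Gamma (3/5 + of_nat (Suc m)) * Gamma (4/5 + of_nat (Suc m)) * Gamma (6/5 + of_nat (Suc m)) * Gamma (7/5 + of_nat (Suc m)))"
    unfolding g3 g4 g6 g7 unfolding of_nat_fact fact_Suc of_nat_Suc by (simp add: mult_ac add.commute distrib_left)
  finally show ?case .
qed

lemma Gamma_Re_pos_nonzero: "Re (r::complex) > 0 \<Longrightarrow> Gamma r \<noteq> 0"
proof (rule Gamma_nonzero)
  assume "Re r > 0"
  show "r \<notin> \<int>\<^sub>\<le>\<^sub>0"
  proof
    assume "r \<in> \<int>\<^sub>\<le>\<^sub>0"
    then have "r \<in> \<real>\<^sub>\<le>\<^sub>0" using nonpos_Ints_subset_nonpos_Reals by blast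
    then have "Re r \<le> 0" by (simp only: complex_nonpos_Reals_iff)
    with \<open>Re r > 0\<close> show False by simp
  qed
qed

lemma map_shift:
  "prod_list (map (\<lambda>p. Gamma (fst p + of_real (snd p) * of_nat m)) (map (\<lambda>(a, A). (a + 2 * of_real A, 5 * A)) l))
   = prod_list (map (\<lambda>p. Gamma (fst p + of_real (snd p) * of_nat (5*m+2))) l)"
  by (induction l) (auto simp: algebra_simps)

lemma alg:
  fixes F G Gm fm N D c x :: complex
  assumes "F * G = 2 * 5^(5*m) * fm * Gm" "G \<noteq> 0" "Gm \<noteq> 0" "fm \<noteq> 0" "F \<noteq> 0"
  shows "5 * c\<^sup>2 * x ^ 4 * G / 2 * (N / (Gm * D) * ((c * x\<^sup>2 / 5) ^ 5) ^ m / fm) = 5 * (N / D * (c * x\<^sup>2) ^ (5*m+2) / F)"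
proof (cases "D = 0")
  case True then show ?thesis by simp
next
  case False
  have F: "F = 2 * 5^(5*m) * fm * Gm / G" using assms(1,2) by (simp add: field_simps)
  have p: "((c * x\<^sup>2 / 5) ^ 5) ^ m = (c * x\<^sup>2) ^ (5*m) / 5^(5*m)"
    by (simp add: power_mult power_divide)
  have q: "(c * x\<^sup>2) ^ (5*m+2) = (c * x\<^sup>2) ^ (5*m) * c\<^sup>2 * x^4"
  proof -
    have "(c * x\<^sup>2) ^ 2 = c\<^sup>2 * x^4" by (simp add: power_mult_distrib power_mult[symmetric])
    then show ?thesis by (simp only: power_add mult.assoc)
  qed
  show ?thesis unfolding F p q using False assms(2-4) by (simp add: field_simps)
qed

theorem theorem4:
  fixes c x :: complex and as bs :: "(complex \<times> real) list"
  defines "\<alpha> \<equiv> exp (2 * of_real pi * \<i> / 5)"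
  assumes "\<forall>p\<in>set as. snd p \<noteq> 0"
    and "\<forall>p\<in>set bs. snd p \<noteq> 0"
    and "fw_num_ok as"
    and "\<forall>k<5::nat. summable (fw_term as bs (c * (x * \<alpha> ^ k)\<^sup>2))"
    and "summable (fw_term (map (\<lambda>(a, A). (a + 2 * of_real A, 5 * A)) as)
           ([(3/5, 1), (4/5, 1), (6/5, 1), (7/5, 1)] @ map (\<lambda>(b, B). (b + 2 * of_real B, 5 * B)) bs)
           ((c * x\<^sup>2 / 5) ^ 5))"
  shows "(\<Sum>k<5::nat. \<alpha> ^ k * fox_wright as bs (c * (x * \<alpha> ^ k)\<^sup>2)) =
    5 * c\<^sup>2 * x ^ 4 * Gamma (3/5) * Gamma (4/5) * Gamma (6/5) * Gamma (7/5) / 2 *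
    fox_wright (map (\<lambda>(a, A). (a + 2 * of_real A, 5 * A)) as)
      ([(3/5, 1), (4/5, 1), (6/5, 1), (7/5, 1)] @ map (\<lambda>(b, B). (b + 2 * of_real B, 5 * B)) bs)
      ((c * x\<^sup>2 / 5) ^ 5)"
proof -
  let ?P = "\<lambda>n::nat. (\<Prod>p\<leftarrow>as. Gamma (fst p + of_real (snd p) * of_nat n)) /
     (\<Prod>p\<leftarrow>bs. Gamma (fst p + of_real (snd p) * of_nat n))"
  let ?z = "c * x\<^sup>2"
  let ?T = "\<lambda>n::nat. ?P n * ?z ^ n / of_nat (fact n)"
  let ?f = "\<lambda>k n. fw_term as bs (c * (x * \<alpha> ^ k)\<^sup>2) n"
  define g where "g n = ?T n * (if 5 dvd (2*n+1) then 5 else 0)" for n :: nat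
  have summ: "\<And>k. k \<in> {..<5::nat} \<Longrightarrow> summable (?f k)" using assms(5) by simp
  have trm: "\<alpha> ^ k * ?f k n = ?T n * (\<alpha> ^ (2*n+1)) ^ k" for k n
  proof -
    have "\<alpha> ^ k * (c * (x * \<alpha> ^ k)\<^sup>2) ^ n = ?z ^ n * (\<alpha> ^ (2*n+1)) ^ k"
      by (simp add: power_mult_distrib power_mult[symmetric] power_add mult_ac)
    moreover have "((\<alpha> ^ k)\<^sup>2) ^ n = (\<alpha> ^ (n*2)) ^ k" by (simp only: power_mult[symmetric] mult_ac)
    ultimately show ?thesis unfolding fw_term_def by (simp add: field_simps)
  qed
  have gsum: "(\<Sum>k<5::nat. \<alpha> ^ k * ?f k n) = g n" for n
  proof -
    have "(\<Sum>k<5::nat. \<alpha> ^ k * ?f k n) = ?T n * (\<Sum>k<5::nat. (\<alpha> ^ (2*n+1)) ^ k)"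
      by (simp only: trm sum_distrib_left)
    also have "\<dots> = g n" unfolding g_def \<alpha>_def root_sum by simp
    finally show ?thesis .
  qed
  have "(\<Sum>k<5::nat. \<alpha> ^ k * fox_wright as bs (c * (x * \<alpha> ^ k)\<^sup>2)) =
        (\<Sum>k<5::nat. (\<Sum>n. \<alpha> ^ k * ?f k n))"
    unfolding fox_wright_def using summ by (simp add: suminf_mult)
  also have "\<dots> = (\<Sum>n. (\<Sum>k<5::nat. \<alpha> ^ k * ?f k n))"
    by (rule suminf_sum[symmetric]) (use summ in \<open>auto intro: summable_mult\<close>)
  also have "\<dots> = suminf g" by (simp only: gsum)
  finally have L: "(\<Sum>k<5::nat. \<alpha> ^ k * fox_wright as bs (c * (x * \<alpha> ^ k)\<^sup>2)) = suminf g" .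
  have gs: "summable g"
  proof -
    have "summable (\<lambda>n. \<Sum>k<5::nat. \<alpha> ^ k * ?f k n)"
      by (rule summable_sum) (use summ in \<open>auto intro: summable_mult\<close>)
    then show ?thesis by (simp only: gsum)
  qed
  have mono: "strict_mono (\<lambda>m::nat. 5*m+2)" by (auto simp: strict_mono_def)
  have zero: "g n = 0" if "n \<notin> range (\<lambda>m::nat. 5*m+2)" for n
  proof -
    have "\<not> 5 dvd (2*n+1)"
    proof
      assume "5 dvd (2*n+1)"
      then have "n mod 5 = 2" by presburger
      then have "n = 5 * (n div 5) + 2" by presburger
      with that show False by blast
    qed
    then show ?thesis unfolding g_def by simp
  qed
  have s1: "(\<lambda>m. g (5*m+2)) sums suminf g"
    using sums_mono_reindex[OF mono, of g] zero gs summable_sums by blast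
  let ?as' = "map (\<lambda>(a, A). (a + 2 * of_real A, 5 * A)) as"
  let ?bs' = "[(3/5, 1), (4/5, 1), (6/5, 1), (7/5, 1)] @ map (\<lambda>(b, B). (b + 2 * of_real B, 5 * B)) bs"
  let ?H = "fw_term ?as' ?bs' ((c * x\<^sup>2 / 5) ^ 5)"
  let ?K = "5 * c\<^sup>2 * x ^ 4 * Gamma (3/5) * Gamma (4/5) * Gamma (6/5) * Gamma (7/5) / 2"
  have gH: "g (5*m+2) = ?K * ?H m" for m
  proof -
    let ?G = "Gamma (3/5) * Gamma (4/5) * Gamma (6/5) * Gamma (7/5) :: complex"
    let ?Gm = "Gamma (3/5 + of_nat m) * Gamma (4/5 + of_nat m) * Gamma (6/5 + of_nat m) * Gamma (7/5 + of_nat m) :: complex"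
    let ?N = "\<Prod>p\<leftarrow>as. Gamma (fst p + of_real (snd p) * of_nat (5*m+2))"
    let ?D = "\<Prod>p\<leftarrow>bs. Gamma (fst p + of_real (snd p) * of_nat (5*m+2))"
    have dv: "5 dvd (2*(5*m+2)+1)" by presburger
    have Hm: "?H m = ?N / (?Gm * ?D) * ((c * x\<^sup>2 / 5) ^ 5) ^ m / of_nat (fact m)"
      unfolding fw_term_def map_append prod_list.append map_shift by (simp add: mult_ac)
    have gm: "g (5*m+2) = 5 * (?N / ?D * ?z ^ (5*m+2) / of_nat (fact (5*m+2)))"
      unfolding g_def using dv by (simp add: mult_ac)
    have "?K * ?H m = 5 * c\<^sup>2 * x ^ 4 * ?G / 2 * (?N / (?Gm * ?D) * ((c * x\<^sup>2 / 5) ^ 5) ^ m / of_nat (fact m))"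
      unfolding Hm by (simp only: mult_ac)
    also have "\<dots> = 5 * (?N / ?D * ?z ^ (5*m+2) / of_nat (fact (5*m+2)))"
    proof (rule alg)
      show "of_nat (fact (5*m+2)) * ?G = 2 * 5^(5*m) * of_nat (fact m) * ?Gm" by (rule fact_gamma)
      show "?G \<noteq> 0" by (simp add: Gamma_Re_pos_nonzero)
      show "?Gm \<noteq> 0" by (simp add: Gamma_Re_pos_nonzero)
      show "(of_nat (fact m) :: complex) \<noteq> 0" by simp
      show "(of_nat (fact (5*m+2)) :: complex) \<noteq> 0" by (simp only: of_nat_eq_0_iff fact_nonzero not_False_eq_True)
    qed
    finally show ?thesis using gm by simp
  qed
  have s2: "(\<lambda>m. g (5*m+2)) sums (?K * suminf ?H)"
    unfolding gH by (rule sums_mult) (rule summable_sums[OF assms(6)])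
  have "suminf g = ?K * suminf ?H" using s1 s2 sums_unique2 by blast
  then show ?thesis using L unfolding fox_wright_def by simp
qed

end
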